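(* Let $\theta\in[0,2\pi)$ and $\alpha_2,\alpha_3\in\mathbb C$. Put $\gamma_\to=e^{i(\theta+\sqrt2\Lambda+3\pi/4)}$, $\gamma_\leftarrow=e^{i(-\theta+\sqrt2\Lambda+3\pi/4)}$, $$D_\gamma=\{\psi_0+c_L(L_++\gamma_\to R_-)+c_R(R_++\gamma_\leftarrow L_-):\psi_0\in D(H_0),\ c_L,c_R\in\mathbb C\},$$ $$D_\alpha=\{\psi\in D(H_0^* ):\psi(\Lambda)=\alpha_2\psi'(-\Lambda)\ \text{and}\ \psi'(\Lambda)=\alpha_3\psi(-\Lambda)\}.$$ Then $D_\gamma=D_\alpha$ if and only if $\alpha_2=-e^{i\theta}$ and $\alpha_3=e^{i\theta}$.
   Context: Fix $\Lambda>0$, $\Omega_\Lambda=(-\infty,-\Lambda)\cup(\Lambda,\infty)$. $D(H_0^* )$ is the set of $\psi\in L^2(\Omega_\Lambda)$ such that $\psi,\psi'$ are locally absolutely continuous on each closed half-line $(-\infty,-\Lambda]$, $[\Lambda,\infty)$ and $\psi''$ is square integrable; $\psi(\pm\Lambda),\psi'(\pm\Lambda)$ are one-sided boundary values. $D(H_0)=\{\psi\in D(H_0^* ):\psi(\pm\Lambda)=\psi'(\pm\Lambda)=0\}$ (the domain of the closure of $-\frac{d^2}{dx^2}$ on $C_0^\infty(\Omega_\Lambda)$). Let $N=2^{1/4}e^{\Lambda/\sqrt2}$ and define on $\Omega_\Lambda$: $R_\pm(x)=0$ for $x<-\Lambda$, $R_\pm(x)=Ne^{(-1\pm i)x/\sqrt2}$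 for $x>\Lambda$; $L_\pm(x)=Ne^{(1\mp i)x/\sqrt2}$ for $x<-\Lambda$, $L_\pm(x)=0$ for $x>\Lambda$. *)

theory Defs
  imports "HOL-Analysis.Analysis"
begin

definition abs_cont_on :: "real \<Rightarrow> real \<Rightarrow> (real \<Rightarrow> complex) \<Rightarrow> bool" where
  "abs_cont_on a b f \<longleftrightarrow>
     (\<forall>\<epsilon>>0. \<exists>\<delta>>0. \<forall>(n::nat) (u::nat \<Rightarrow> real) (v::nat \<Rightarrow> real).
        (\<forall>k<n. a \<le> u k \<and> u k \<le> v k \<and> v k \<le> b) \<and>
        (\<forall>j<n. \<forall>k<n. j \<noteq> k \<longrightarrow> v j \<le> u k \<or> v k \<le> u j) \<and>
        (\<Sum>k<n. v k - u k) < \<delta>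
        \<longrightarrow> (\<Sum>k<n. cmod (f (v k) - f (u k))) < \<epsilon>)"

definition loc_abs_cont_on :: "real set \<Rightarrow> (real \<Rightarrow> complex) \<Rightarrow> bool" where
  "loc_abs_cont_on I f \<longleftrightarrow> (\<forall>a\<in>I. \<forall>b\<in>I. a \<le> b \<longrightarrow> abs_cont_on a b f)"

definition L2_on :: "real set \<Rightarrow> (real \<Rightarrow> complex) \<Rightarrow> bool" where
  "L2_on S f \<longleftrightarrow> f \<in> borel_measurable (lebesgue_on S) \<and>
                  integrable (lebesgue_on S) (\<lambda>x. (cmod (f x))^2)"

definition Omega :: "real \<Rightarrow> real set" where
  "Omega \<Lambda> = {..<-\<Lambda>} \<union> {\<Lambda><..}"

definition halflines :: "real \<Rightarrow> real set set" where
  "halflines \<Lambda> = {{..-\<Lambda>}, {\<Lambda>..}}"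

definition dv :: "real set \<Rightarrow> (real \<Rightarrow> complex) \<Rightarrow> real \<Rightarrow> complex" where
  "dv I \<psi> x = vector_derivative \<psi> (at x within I)"

text \<open>Functions on \<Omega>_\<Lambda> are represented as functions real => complex which vanish on the
  open gap (-\<Lambda>,\<Lambda>); their values at \<plusminus>\<Lambda> are the one-sided boundary values.\<close>
definition DH0star :: "real \<Rightarrow> (real \<Rightarrow> complex) set" where
  "DH0star \<Lambda> = {\<psi>. (\<forall>x. -\<Lambda> < x \<and> x < \<Lambda> \<longrightarrow> \<psi> x = 0) \<and> L2_on (Omega \<Lambda>) \<psi> \<and>
     (\<forall>I\<in>halflines \<Lambda>.
        loc_abs_cont_on I \<psi> \<and>
        (\<forall>x\<in>I. \<psi> differentiable (at x within I)) \<and>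
        loc_abs_cont_on I (dv I \<psi>) \<and>
        (\<exists>g. L2_on I g \<and>
             (AE x in lebesgue. x \<in> I \<longrightarrow> (dv I \<psi> has_vector_derivative g x) (at x within I))))}"

definition dm :: "real \<Rightarrow> (real \<Rightarrow> complex) \<Rightarrow> complex" where
  "dm \<Lambda> \<psi> = dv {..-\<Lambda>} \<psi> (-\<Lambda>)"

definition dp :: "real \<Rightarrow> (real \<Rightarrow> complex) \<Rightarrow> complex" where
  "dp \<Lambda> \<psi> = dv {\<Lambda>..} \<psi> \<Lambda>"

definition DH0 :: "real \<Rightarrow> (real \<Rightarrow> complex) set" where
  "DH0 \<Lambda> = {\<psi>\<in>DH0star \<Lambda>. \<psi> (-\<Lambda>) = 0 \<and> \<psi> \<Lambda> = 0 \<and> dm \<Lambda> \<psi> = 0 \<and> dp \<Lambda> \<psi> = 0}"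

definition Nc :: "real \<Rightarrow> real" where
  "Nc \<Lambda> = 2 powr (1/4) * exp (\<Lambda> / sqrt 2)"

definition Rp :: "real \<Rightarrow> real \<Rightarrow> complex" where
  "Rp \<Lambda> x = (if \<Lambda> \<le> x then of_real (Nc \<Lambda>) * exp ((-1 + \<i>) * of_real (x / sqrt 2)) else 0)"
definition Rm :: "real \<Rightarrow> real \<Rightarrow> complex" where
  "Rm \<Lambda> x = (if \<Lambda> \<le> x then of_real (Nc \<Lambda>) * exp ((-1 - \<i>) * of_real (x / sqrt 2)) else 0)"
definition Lp :: "real \<Rightarrow> real \<Rightarrow> complex" where
  "Lp \<Lambda> x = (if x \<le> -\<Lambda> then of_real (Nc \<Lambda>) * exp ((1 - \<i>) * of_real (x / sqrt 2)) else 0)"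
definition Lm :: "real \<Rightarrow> real \<Rightarrow> complex" where
  "Lm \<Lambda> x = (if x \<le> -\<Lambda> then of_real (Nc \<Lambda>) * exp ((1 + \<i>) * of_real (x / sqrt 2)) else 0)"

definition gamma_r :: "real \<Rightarrow> real \<Rightarrow> complex" where
  "gamma_r \<Lambda> \<theta> = exp (\<i> * of_real (\<theta> + sqrt 2 * \<Lambda> + 3 * pi / 4))"
definition gamma_l :: "real \<Rightarrow> real \<Rightarrow> complex" where
  "gamma_l \<Lambda> \<theta> = exp (\<i> * of_real (- \<theta> + sqrt 2 * \<Lambda> + 3 * pi / 4))"

definition Dgamma :: "real \<Rightarrow> real \<Rightarrow> (real \<Rightarrow> complex) set" where
  "Dgamma \<Lambda> \<theta> = {\<lambda>x. \<psi>0 x + cL * (Lp \<Lambda> x + gamma_r \<Lambda> \<theta> * Rm \<Lambda> x)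
                          + cR * (Rp \<Lambda> x + gamma_l \<Lambda> \<theta> * Lm \<Lambda> x)
                   | \<psi>0 cL cR. \<psi>0 \<in> DH0 \<Lambda>}"

definition Dalpha :: "real \<Rightarrow> complex \<Rightarrow> complex \<Rightarrow> (real \<Rightarrow> complex) set" where
  "Dalpha \<Lambda> a2 a3 = {\<psi>\<in>DH0star \<Lambda>. \<psi> \<Lambda> = a2 * dm \<Lambda> \<psi> \<and> dp \<Lambda> \<psi> = a3 * \<psi> (-\<Lambda>)}"

end

theory Submission
  imports Defs
begin


lemma abs_cont_cong:
  assumes "\<And>x. a \<le> x \<Longrightarrow> x \<le> b \<Longrightarrow> f x = g x" "abs_cont_on a b g"
  shows "abs_cont_on a b f"
  unfolding abs_cont_on_def
proof (intro allI impI)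
  fix \<epsilon> :: real assume "\<epsilon> > 0"
  then obtain \<delta> where d: "\<delta> > 0" "\<forall>(n::nat) (u::nat \<Rightarrow> real) (v::nat \<Rightarrow> real).
        (\<forall>k<n. a \<le> u k \<and> u k \<le> v k \<and> v k \<le> b) \<and>
        (\<forall>j<n. \<forall>k<n. j \<noteq> k \<longrightarrow> v j \<le> u k \<or> v k \<le> u j) \<and>
        (\<Sum>k<n. v k - u k) < \<delta>
        \<longrightarrow> (\<Sum>k<n. cmod (g (v k) - g (u k))) < \<epsilon>"
    using assms(2) unfolding abs_cont_on_def by blast
  show "\<exists>\<delta>>0. \<forall>(n::nat) (u::nat \<Rightarrow> real) (v::nat \<Rightarrow> real).
        (\<forall>k<n. a \<le> u k \<and> u k \<le> v k \<and> v k \<le> b) \<and>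
        (\<forall>j<n. \<forall>k<n. j \<noteq> k \<longrightarrow> v j \<le> u k \<or> v k \<le> u j) \<and>
        (\<Sum>k<n. v k - u k) < \<delta>
        \<longrightarrow> (\<Sum>k<n. cmod (f (v k) - f (u k))) < \<epsilon>"
  proof (intro exI[of _ \<delta>] conjI allI impI)
    fix n u v assume h: "(\<forall>k<(n::nat). a \<le> u k \<and> u k \<le> v k \<and> v k \<le> b) \<and>
        (\<forall>j<n. \<forall>k<n. j \<noteq> k \<longrightarrow> v j \<le> u k \<or> v k \<le> u j) \<and>
        (\<Sum>k<n. v k - u k) < \<delta>"
    have "(\<Sum>k<n. cmod (f (v k) - f (u k))) = (\<Sum>k<n. cmod (g (v k) - g (u k)))"
      using h assms(1) by (intro sum.cong) auto
    with d h show "(\<Sum>k<n. cmod (f (v k) - f (u k))) < \<epsilon>" by auto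
  qed (use d in auto)
qed

lemma abs_cont_lip:
  assumes "\<And>x y. a \<le> x \<Longrightarrow> x \<le> b \<Longrightarrow> a \<le> y \<Longrightarrow> y \<le> b \<Longrightarrow> cmod (f x - f y) \<le> B * \<bar>x - y\<bar>"
  shows "abs_cont_on a b f"
  unfolding abs_cont_on_def
proof (intro allI impI)
  fix \<epsilon> :: real assume e: "\<epsilon> > 0"
  define \<delta> where "\<delta> = \<epsilon> / (\<bar>B\<bar> + 1)"
  have dpos: "\<delta> > 0" using e by (simp add: \<delta>_def add_pos_nonneg)
  have key: "\<bar>B\<bar> * \<delta> < \<epsilon>"
  proof -
    have "\<bar>B\<bar> * \<delta> = \<epsilon> * (\<bar>B\<bar> / (\<bar>B\<bar> + 1))" by (simp add: \<delta>_def)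
    also have "\<dots> < \<epsilon> * 1" using e by (intro mult_strict_left_mono) auto
    finally show ?thesis by simp
  qed
  show "\<exists>\<delta>>0. \<forall>(n::nat) (u::nat \<Rightarrow> real) (v::nat \<Rightarrow> real).
        (\<forall>k<n. a \<le> u k \<and> u k \<le> v k \<and> v k \<le> b) \<and>
        (\<forall>j<n. \<forall>k<n. j \<noteq> k \<longrightarrow> v j \<le> u k \<or> v k \<le> u j) \<and>
        (\<Sum>k<n. v k - u k) < \<delta>
        \<longrightarrow> (\<Sum>k<n. cmod (f (v k) - f (u k))) < \<epsilon>"
  proof (intro exI[of _ \<delta>] conjI allI impI dpos)
    fix n u v assume h: "(\<forall>k<(n::nat). a \<le> u k \<and> u k \<le> v k \<and> v k \<le> b) \<and>
        (\<forall>j<n. \<forall>k<n. j \<noteq> k \<longrightarrow> v j \<le> u k \<or> v k \<le> u j) \<and>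
        (\<Sum>k<n. v k - u k) < \<delta>"
    have "(\<Sum>k<n. cmod (f (v k) - f (u k))) \<le> (\<Sum>k<n. \<bar>B\<bar> * (v k - u k))"
    proof (intro sum_mono)
      fix k assume "k \<in> {..<n}"
      then have "a \<le> u k" "u k \<le> v k" "v k \<le> b" using h by auto
      then have "cmod (f (v k) - f (u k)) \<le> B * \<bar>v k - u k\<bar>" using assms[of "v k" "u k"] by linarith
      also have "\<dots> \<le> \<bar>B\<bar> * (v k - u k)" using \<open>u k \<le> v k\<close> by (simp add: abs_le_iff mult_right_mono)
      finally show "cmod (f (v k) - f (u k)) \<le> \<bar>B\<bar> * (v k - u k)" .
    qed
    also have "\<dots> = \<bar>B\<bar> * (\<Sum>k<n. v k - u k)" by (simp add: sum_distrib_left)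
    also have "\<dots> \<le> \<bar>B\<bar> * \<delta>" using h by (intro mult_left_mono) auto
    finally show "(\<Sum>k<n. cmod (f (v k) - f (u k))) < \<epsilon>" using key by linarith
  qed
qed

lemma abs_cont_add:
  assumes "abs_cont_on a b f" "abs_cont_on a b g"
  shows "abs_cont_on a b (\<lambda>x. f x + g x)"
  unfolding abs_cont_on_def
proof (intro allI impI)
  fix \<epsilon> :: real assume e: "\<epsilon> > 0"
  then have e2: "\<epsilon>/2 > 0" by simp
  obtain d1 where d1: "d1 > 0" "\<forall>(n::nat) (u::nat \<Rightarrow> real) (v::nat \<Rightarrow> real).
        (\<forall>k<n. a \<le> u k \<and> u k \<le> v k \<and> v k \<le> b) \<and>
        (\<forall>j<n. \<forall>k<n. j \<noteq> k \<longrightarrow> v j \<le> u k \<or> v k \<le> u j) \<and>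
        (\<Sum>k<n. v k - u k) < d1
        \<longrightarrow> (\<Sum>k<n. cmod (f (v k) - f (u k))) < \<epsilon>/2"
    using assms(1) e2 unfolding abs_cont_on_def by blast
  obtain d2 where d2: "d2 > 0" "\<forall>(n::nat) (u::nat \<Rightarrow> real) (v::nat \<Rightarrow> real).
        (\<forall>k<n. a \<le> u k \<and> u k \<le> v k \<and> v k \<le> b) \<and>
        (\<forall>j<n. \<forall>k<n. j \<noteq> k \<longrightarrow> v j \<le> u k \<or> v k \<le> u j) \<and>
        (\<Sum>k<n. v k - u k) < d2
        \<longrightarrow> (\<Sum>k<n. cmod (g (v k) - g (u k))) < \<epsilon>/2"
    using assms(2) e2 unfolding abs_cont_on_def by blast
  show "\<exists>\<delta>>0. \<forall>(n::nat) (u::nat \<Rightarrow> real) (v::nat \<Rightarrow> real).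
        (\<forall>k<n. a \<le> u k \<and> u k \<le> v k \<and> v k \<le> b) \<and>
        (\<forall>j<n. \<forall>k<n. j \<noteq> k \<longrightarrow> v j \<le> u k \<or> v k \<le> u j) \<and>
        (\<Sum>k<n. v k - u k) < \<delta>
        \<longrightarrow> (\<Sum>k<n. cmod ((f (v k) + g (v k)) - (f (u k) + g (u k)))) < \<epsilon>"
  proof (intro exI[of _ "min d1 d2"] conjI allI impI)
    fix n u v assume h: "(\<forall>k<(n::nat). a \<le> u k \<and> u k \<le> v k \<and> v k \<le> b) \<and>
        (\<forall>j<n. \<forall>k<n. j \<noteq> k \<longrightarrow> v j \<le> u k \<or> v k \<le> u j) \<and>
        (\<Sum>k<n. v k - u k) < min d1 d2"
    have "(\<Sum>k<n. cmod ((f (v k) + g (v k)) - (f (u k) + g (u k))))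
        \<le> (\<Sum>k<n. cmod (f (v k) - f (u k)) + cmod (g (v k) - g (u k)))"
      by (intro sum_mono) (metis add_diff_add norm_triangle_ineq)
    also have "\<dots> = (\<Sum>k<n. cmod (f (v k) - f (u k))) + (\<Sum>k<n. cmod (g (v k) - g (u k)))"
      by (simp add: sum.distrib)
    also have "\<dots> < \<epsilon>/2 + \<epsilon>/2"
      using d1(2)[rule_format, of n u v] d2(2)[rule_format, of n u v] h by (intro add_strict_mono) auto
    finally show "(\<Sum>k<n. cmod ((f (v k) + g (v k)) - (f (u k) + g (u k)))) < \<epsilon>" by simp
  qed (use d1 d2 in auto)
qed

lemma abs_cont_cmult:
  assumes "abs_cont_on a b f"
  shows "abs_cont_on a b (\<lambda>x. c * f x)"
  unfolding abs_cont_on_def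
proof (intro allI impI)
  fix \<epsilon> :: real assume e: "\<epsilon> > 0"
  have cp: "cmod c + 1 > 0" by (smt (verit) norm_ge_zero)
  then have e2: "\<epsilon>/(cmod c + 1) > 0" using e by (intro divide_pos_pos)
  obtain d1 where d1: "d1 > 0" "\<forall>(n::nat) (u::nat \<Rightarrow> real) (v::nat \<Rightarrow> real).
        (\<forall>k<n. a \<le> u k \<and> u k \<le> v k \<and> v k \<le> b) \<and>
        (\<forall>j<n. \<forall>k<n. j \<noteq> k \<longrightarrow> v j \<le> u k \<or> v k \<le> u j) \<and>
        (\<Sum>k<n. v k - u k) < d1
        \<longrightarrow> (\<Sum>k<n. cmod (f (v k) - f (u k))) < \<epsilon>/(cmod c + 1)"
    using assms(1) e2 unfolding abs_cont_on_def by blast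
  show "\<exists>\<delta>>0. \<forall>(n::nat) (u::nat \<Rightarrow> real) (v::nat \<Rightarrow> real).
        (\<forall>k<n. a \<le> u k \<and> u k \<le> v k \<and> v k \<le> b) \<and>
        (\<forall>j<n. \<forall>k<n. j \<noteq> k \<longrightarrow> v j \<le> u k \<or> v k \<le> u j) \<and>
        (\<Sum>k<n. v k - u k) < \<delta>
        \<longrightarrow> (\<Sum>k<n. cmod (c * f (v k) - c * f (u k))) < \<epsilon>"
  proof (intro exI[of _ d1] conjI allI impI)
    fix n u v assume h: "(\<forall>k<(n::nat). a \<le> u k \<and> u k \<le> v k \<and> v k \<le> b) \<and>
        (\<forall>j<n. \<forall>k<n. j \<noteq> k \<longrightarrow> v j \<le> u k \<or> v k \<le> u j) \<and>
        (\<Sum>k<n. v k - u k) < d1"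
    have S: "(\<Sum>k<n. cmod (f (v k) - f (u k))) < \<epsilon>/(cmod c + 1)" using d1(2) h by blast
    have "(\<Sum>k<n. cmod (c * f (v k) - c * f (u k))) = cmod c * (\<Sum>k<n. cmod (f (v k) - f (u k)))"
      by (simp add: sum_distrib_left norm_mult right_diff_distrib[symmetric])
    also have "\<dots> \<le> cmod c * (\<epsilon>/(cmod c + 1))" using S by (intro mult_left_mono) auto
    also have "\<dots> = \<epsilon> * (cmod c / (cmod c + 1))" by simp
    also have "\<dots> < \<epsilon> * 1" using e cp by (intro mult_strict_left_mono) (auto simp: divide_less_eq)
    finally show "(\<Sum>k<n. cmod (c * f (v k) - c * f (u k))) < \<epsilon>" by simp
  qed (use d1 in auto)
qed



lemma E_deriv: fixes c k :: complex shows
 "((\<lambda>x::real. c * exp (k * of_real x)) has_vector_derivative (c * k * exp (k * of_real x))) (at x within S)"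
proof -
  have "((\<lambda>z. c * exp (k * z)) has_field_derivative (c * k * exp (k * of_real x))) (at (of_real x))"
    by (auto intro!: derivative_eq_intros)
  from has_vector_derivative_real_field[OF this] show ?thesis .
qed

lemma E_lip:
  fixes c k :: complex
  assumes "a \<le> x" "x \<le> b" "a \<le> y" "y \<le> b"
  shows "cmod (c * exp (k * of_real x) - c * exp (k * of_real y))
     \<le> (cmod c * cmod k * exp (\<bar>Re k\<bar> * (\<bar>a\<bar> + \<bar>b\<bar>))) * \<bar>x - y\<bar>"
proof -
  have "norm ((\<lambda>x::real. c * exp (k * of_real x)) x - (\<lambda>x::real. c * exp (k * of_real x)) y)
     \<le> (cmod c * cmod k * exp (\<bar>Re k\<bar> * (\<bar>a\<bar> + \<bar>b\<bar>))) * norm (x - y)"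
  proof (rule differentiable_bound[where S="{a..b}" and f'="\<lambda>x h. h *\<^sub>R (c * k * exp (k * of_real x))"])
    show "convex {a..b}" by simp
    show "((\<lambda>x. c * exp (k * complex_of_real x)) has_derivative (\<lambda>h. h *\<^sub>R (c * k * exp (k * of_real z)))) (at z within {a..b})" for z
      using E_deriv[of c k z "{a..b}"] unfolding has_vector_derivative_def .
    show "onorm (\<lambda>h. h *\<^sub>R (c * k * exp (k * of_real z))) \<le> cmod c * cmod k * exp (\<bar>Re k\<bar> * (\<bar>a\<bar> + \<bar>b\<bar>))"
      if z: "z \<in> {a..b}" for z
    proof -
      have "onorm (\<lambda>h::real. h *\<^sub>R (c * k * exp (k * of_real z))) = onorm (\<lambda>h::real. h) * norm (c * k * exp (k * of_real z))"
        by (rule onorm_scaleR_left) (rule bounded_linear_ident)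
      also have "\<dots> = cmod c * cmod k * exp (Re k * z)"
        by (simp add: onorm_id norm_mult norm_exp_eq_Re)
      also have "\<dots> \<le> cmod c * cmod k * exp (\<bar>Re k\<bar> * (\<bar>a\<bar> + \<bar>b\<bar>))"
      proof (intro mult_left_mono exp_mono)
        have "\<bar>z\<bar> \<le> \<bar>a\<bar> + \<bar>b\<bar>" using z by auto
        then have "\<bar>Re k\<bar> * \<bar>z\<bar> \<le> \<bar>Re k\<bar> * (\<bar>a\<bar> + \<bar>b\<bar>)" by (intro mult_left_mono) auto
        moreover have "Re k * z \<le> \<bar>Re k\<bar> * \<bar>z\<bar>" by (metis abs_ge_self abs_mult)
        ultimately show "Re k * z \<le> \<bar>Re k\<bar> * (\<bar>a\<bar> + \<bar>b\<bar>)" by linarith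
      qed auto
      finally show ?thesis .
    qed
  qed (use assms in auto)
  then show ?thesis by simp
qed

lemma E_abs_cont:
  fixes c k :: complex
  shows "abs_cont_on a b (\<lambda>x. c * exp (k * of_real x))"
  by (rule abs_cont_lip) (rule E_lip)

lemma exp_int_right:
  assumes "r > 0"
  shows "integrable lebesgue (\<lambda>x::real. indicator {c..} x *\<^sub>R (exp (- r * x)::real))"
proof -
  have "(\<lambda>x. exp(-r*x)) integrable_on {c..}" by (rule integrable_on_exp_minus_to_infinity[OF assms])
  then have "(\<lambda>x. exp(-r*x)) absolutely_integrable_on {c..}" by (rule nonnegative_absolutely_integrable_1) auto
  then show ?thesis by (simp add: set_integrable_def)
qed

lemma exp_int_left:
  assumes "r > 0"
  shows "integrable lebesgue (\<lambda>x::real. indicator {..c} x *\<^sub>R (exp (r * x)::real))"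
proof -
  have "integrable lebesgue (\<lambda>x::real. indicator {-c..} x *\<^sub>R (exp (- r * x)::real))" by (rule exp_int_right[OF assms])
  also have "(\<lambda>x::real. indicator {-c..} x *\<^sub>R (exp (- r * x)::real)) = (\<lambda>x. (\<lambda>x. indicator {..c} x *\<^sub>R (exp (r * x)::real)) (0 + (-1) * x))"
    by (auto simp: indicator_def fun_eq_iff; linarith)
  finally show ?thesis using lebesgue_integrable_real_affine_iff[of "-1" "\<lambda>x. indicator {..c} x *\<^sub>R (exp (r * x)::real)" 0]
    by simp
qed

lemma L2_onI:
  fixes f :: "real \<Rightarrow> complex"
  assumes "f \<in> borel_measurable lebesgue" "S \<in> sets lebesgue" "integrable lebesgue h"
    "\<And>x. x \<in> S \<Longrightarrow> cmod (f x)^2 \<le> h x"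
  shows "L2_on S f"
  unfolding L2_on_def
proof
  show "f \<in> borel_measurable (lebesgue_on S)" using assms(1) by (rule measurable_restrict_space1)
  have "integrable lebesgue (\<lambda>x. indicator S x *\<^sub>R (cmod (f x))^2)"
  proof (rule Bochner_Integration.integrable_bound[OF assms(3)])
    show "(\<lambda>x. indicator S x *\<^sub>R (cmod (f x))^2) \<in> borel_measurable lebesgue"
      using assms(1,2) by measurable
    show "AE x in lebesgue. norm (indicator S x *\<^sub>R (cmod (f x))^2) \<le> norm (h x)"
    proof (rule AE_I2)
      fix x show "norm (indicator S x *\<^sub>R (cmod (f x))^2) \<le> norm (h x)"
        using assms(4)[of x] by (auto simp: indicator_def)
    qed
  qed
  then show "integrable (lebesgue_on S) (\<lambda>x. (cmod (f x))^2)"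
    using assms(2) by (subst integrable_restrict_space) auto
qed

lemma L2_add:
  assumes "L2_on S f" "L2_on S g"
  shows "L2_on S (\<lambda>x. f x + g x)"
  unfolding L2_on_def
proof
  have m: "f \<in> borel_measurable (lebesgue_on S)" "g \<in> borel_measurable (lebesgue_on S)"
    using assms unfolding L2_on_def by auto
  then show "(\<lambda>x. f x + g x) \<in> borel_measurable (lebesgue_on S)" by measurable
  have i: "integrable (lebesgue_on S) (\<lambda>x. 2 * (cmod (f x))^2 + 2 * (cmod (g x))^2)"
    using assms unfolding L2_on_def by auto
  show "integrable (lebesgue_on S) (\<lambda>x. (cmod (f x + g x))^2)"
  proof (rule Bochner_Integration.integrable_bound[OF i])
    show "(\<lambda>x. (cmod (f x + g x))^2) \<in> borel_measurable (lebesgue_on S)" using m by measurable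
    show "AE x in lebesgue_on S. norm ((cmod (f x + g x))^2) \<le> norm (2 * (cmod (f x))^2 + 2 * (cmod (g x))^2)"
    proof (rule AE_I2)
      fix x
      have t: "cmod (f x + g x) \<le> cmod (f x) + cmod (g x)" by (rule norm_triangle_ineq)
      have "(cmod (f x + g x))^2 \<le> (cmod (f x) + cmod (g x))^2" using t by (intro power_mono) auto
      also have "\<dots> \<le> 2 * (cmod (f x))^2 + 2 * (cmod (g x))^2"
      proof -
        have "0 \<le> (cmod (f x) - cmod (g x))^2" by simp
        then show ?thesis unfolding power2_diff power2_sum by linarith
      qed
      finally show "norm ((cmod (f x + g x))^2) \<le> norm (2 * (cmod (f x))^2 + 2 * (cmod (g x))^2)" by simp
    qed
  qed
qed

lemma L2_cmult:
  assumes "L2_on S f"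
  shows "L2_on S (\<lambda>x. c * f x)"
  unfolding L2_on_def
proof
  have m: "f \<in> borel_measurable (lebesgue_on S)" using assms unfolding L2_on_def by auto
  then show "(\<lambda>x. c * f x) \<in> borel_measurable (lebesgue_on S)" by measurable
  have "integrable (lebesgue_on S) (\<lambda>x. (cmod c)^2 * (cmod (f x))^2)"
    using assms unfolding L2_on_def by auto
  then show "integrable (lebesgue_on S) (\<lambda>x. (cmod (c * f x))^2)"
    by (simp add: norm_mult power_mult_distrib)
qed



definition HL :: "real set \<Rightarrow> (real \<Rightarrow> complex) \<Rightarrow> bool" where
 "HL I \<psi> \<longleftrightarrow> loc_abs_cont_on I \<psi> \<and>
        (\<forall>x\<in>I. \<psi> differentiable (at x within I)) \<and>
        loc_abs_cont_on I (dv I \<psi>) \<and>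
        (\<exists>g. L2_on I g \<and>
             (AE x in lebesgue. x \<in> I \<longrightarrow> (dv I \<psi> has_vector_derivative g x) (at x within I)))"

lemma DH0star_iff: "\<psi> \<in> DH0star \<Lambda> \<longleftrightarrow> (\<forall>x. -\<Lambda> < x \<and> x < \<Lambda> \<longrightarrow> \<psi> x = 0) \<and> L2_on (Omega \<Lambda>) \<psi>
   \<and> HL {..-\<Lambda>} \<psi> \<and> HL {\<Lambda>..} \<psi>"
  by (simp add: DH0star_def halflines_def HL_def)

definition half :: "real set \<Rightarrow> bool" where
  "half I \<longleftrightarrow> (\<exists>a. I = {..a} \<or> I = {a..})"

lemma half_notbot: assumes "half I" "x \<in> I" shows "at x within I \<noteq> bot"
proof -
  obtain a where a: "I = {..a} \<or> I = {a..}" using assms(1) half_def by auto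
  have "x islimpt I"
    unfolding islimpt_approachable_real
  proof (intro allI impI)
    fix e :: real assume e: "e > 0"
    show "\<exists>x'\<in>I. x' \<noteq> x \<and> \<bar>x' - x\<bar> < e"
      using a
    proof
      assume "I = {..a}" then show ?thesis using e assms(2) by (intro bexI[of _ "x - e/2"]) auto
    next
      assume "I = {a..}" then show ?thesis using e assms(2) by (intro bexI[of _ "x + e/2"]) auto
    qed
  qed
  then show ?thesis by (simp add: trivial_limit_within)
qed

lemma half_convex: assumes "half I" "a \<in> I" "b \<in> I" "a \<le> x" "x \<le> b" shows "x \<in> I"
  using assms unfolding half_def by auto

lemma loc_add: "loc_abs_cont_on I f \<Longrightarrow> loc_abs_cont_on I g \<Longrightarrow> loc_abs_cont_on I (\<lambda>x. f x + g x)"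
  unfolding loc_abs_cont_on_def by (auto intro: abs_cont_add)

lemma loc_cmult: "loc_abs_cont_on I f \<Longrightarrow> loc_abs_cont_on I (\<lambda>x. c * f x)"
  unfolding loc_abs_cont_on_def by (auto intro: abs_cont_cmult)

lemma loc_cong: assumes "half I" "\<And>x. x \<in> I \<Longrightarrow> f x = g x" "loc_abs_cont_on I g"
  shows "loc_abs_cont_on I f"
  unfolding loc_abs_cont_on_def
proof (intro ballI impI)
  fix a b assume ab: "a \<in> I" "b \<in> I" "a \<le> b"
  show "abs_cont_on a b f"
    by (rule abs_cont_cong[where g=g]) (use ab assms half_convex[OF assms(1) ab(1,2)] loc_abs_cont_on_def in auto)
qed

lemma dv_add:
  assumes "half I" "x \<in> I" "f differentiable (at x within I)" "g differentiable (at x within I)"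
  shows "dv I (\<lambda>x. f x + g x) x = dv I f x + dv I g x"
  unfolding dv_def
  by (rule vector_derivative_within[OF half_notbot[OF assms(1,2)]])
     (intro has_vector_derivative_add assms(3,4)[unfolded vector_derivative_works])

lemma dv_cmult:
  assumes "half I" "x \<in> I" "f differentiable (at x within I)"
  shows "dv I (\<lambda>x. c * f x) x = c * dv I f x"
  unfolding dv_def
  by (rule vector_derivative_within[OF half_notbot[OF assms(1,2)]])
     (intro has_vector_derivative_mult_right assms(3)[unfolded vector_derivative_works])

lemma HL_add:
  assumes "half I" "HL I f" "HL I g"
  shows "HL I (\<lambda>x. f x + g x)"
proof -
  obtain gf where gf: "L2_on I gf" "AE x in lebesgue. x \<in> I \<longrightarrow> (dv I f has_vector_derivative gf x) (at x within I)"
    using assms(2) HL_def by auto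
  obtain gg where gg: "L2_on I gg" "AE x in lebesgue. x \<in> I \<longrightarrow> (dv I g has_vector_derivative gg x) (at x within I)"
    using assms(3) HL_def by auto
  have df: "\<forall>x\<in>I. f differentiable (at x within I)" and dg: "\<forall>x\<in>I. g differentiable (at x within I)"
    using assms HL_def by auto
  have eq: "\<And>x. x \<in> I \<Longrightarrow> dv I (\<lambda>x. f x + g x) x = dv I f x + dv I g x"
    using dv_add[OF assms(1)] df dg by auto
  show ?thesis unfolding HL_def
  proof (intro conjI ballI exI[of _ "\<lambda>x. gf x + gg x"])
    show "loc_abs_cont_on I (\<lambda>x. f x + g x)" using assms loc_add HL_def by auto
    show "(\<lambda>x. f x + g x) differentiable at x within I" if "x \<in> I" for x
      using df dg that by (auto intro: differentiable_add)
    show "loc_abs_cont_on I (dv I (\<lambda>x. f x + g x))"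
      by (rule loc_cong[OF assms(1) eq]) (use assms loc_add HL_def in auto)
    show "L2_on I (\<lambda>x. gf x + gg x)" using gf gg L2_add by auto
    show "AE x in lebesgue. x \<in> I \<longrightarrow> (dv I (\<lambda>x. f x + g x) has_vector_derivative gf x + gg x) (at x within I)"
      using gf(2) gg(2)
    proof eventually_elim
      case (elim x)
      show ?case
      proof
        assume x: "x \<in> I"
        have "((\<lambda>y. dv I f y + dv I g y) has_vector_derivative gf x + gg x) (at x within I)"
          using elim x by (intro has_vector_derivative_add) auto
        then show "(dv I (\<lambda>x. f x + g x) has_vector_derivative gf x + gg x) (at x within I)"
          by (rule has_vector_derivative_transform_within[where d=1]) (use x eq in auto)
      qed
    qed
  qed
qed

lemma HL_cmult:
  assumes "half I" "HL I f"
  shows "HL I (\<lambda>x. c * f x)"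
proof -
  obtain gf where gf: "L2_on I gf" "AE x in lebesgue. x \<in> I \<longrightarrow> (dv I f has_vector_derivative gf x) (at x within I)"
    using assms(2) HL_def by auto
  have df: "\<forall>x\<in>I. f differentiable (at x within I)"
    using assms HL_def by auto
  have eq: "\<And>x. x \<in> I \<Longrightarrow> dv I (\<lambda>x. c * f x) x = c * dv I f x"
    using dv_cmult[OF assms(1)] df by auto
  show ?thesis unfolding HL_def
  proof (intro conjI ballI exI[of _ "\<lambda>x. c * gf x"])
    show "loc_abs_cont_on I (\<lambda>x. c * f x)" using assms loc_cmult HL_def by auto
    show "(\<lambda>x. c * f x) differentiable at x within I" if "x \<in> I" for x
      using df that by (auto intro: differentiable_mult differentiable_const)
    show "loc_abs_cont_on I (dv I (\<lambda>x. c * f x))"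
      by (rule loc_cong[OF assms(1) eq]) (use assms loc_cmult HL_def in auto)
    show "L2_on I (\<lambda>x. c * gf x)" using gf L2_cmult by auto
    show "AE x in lebesgue. x \<in> I \<longrightarrow> (dv I (\<lambda>x. c * f x) has_vector_derivative c * gf x) (at x within I)"
      using gf(2)
    proof eventually_elim
      case (elim x)
      show ?case
      proof
        assume x: "x \<in> I"
        have "((\<lambda>y. c * dv I f y) has_vector_derivative c * gf x) (at x within I)"
          using elim x by (intro has_vector_derivative_mult_right) auto
        then show "(dv I (\<lambda>x. c * f x) has_vector_derivative c * gf x) (at x within I)"
          by (rule has_vector_derivative_transform_within[where d=1]) (use x eq in auto)
      qed
    qed
  qed
qed



definition good :: "real set \<Rightarrow> complex \<Rightarrow> bool" where
  "good I k \<longleftrightarrow> (\<exists>a. I = {a..} \<and> Re k < 0 \<or> I = {..a} \<and> 0 < Re k)"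

lemma good_half: "good I k \<Longrightarrow> half I" unfolding good_def half_def by auto

lemma E_meas: fixes c k :: complex shows "(\<lambda>x::real. c * exp (k * of_real x)) \<in> borel_measurable lebesgue"
  by (intro measurable_completion borel_measurable_continuous_onI) (auto intro!: continuous_intros)

lemma E_norm2: fixes c k :: complex shows "(cmod (c * exp (k * of_real x)))^2 = (cmod c)^2 * exp (2 * Re k * x)"
proof -
  have "(cmod (c * exp (k * of_real x)))^2 = (cmod c)^2 * (exp (Re k * x))^2"
    by (simp add: norm_mult norm_exp_eq_Re power_mult_distrib)
  also have "(exp (Re k * x))^2 = exp (2 * Re k * x)"
    by (simp add: power2_eq_square exp_add[symmetric])
  finally show ?thesis .
qed

lemma E_L2:
  fixes c :: complex assumes "good I k"
  shows "L2_on I (\<lambda>x. c * exp (k * of_real x))"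
proof -
  obtain a where a: "I = {a..} \<and> Re k < 0 \<or> I = {..a} \<and> 0 < Re k" using assms good_def by auto
  then show ?thesis
  proof
    assume h: "I = {a..} \<and> Re k < 0"
    show ?thesis
    proof (rule L2_onI[OF E_meas _ integrable_mult_right[OF exp_int_right[of "-2 * Re k" a]]])
      show "I \<in> sets lebesgue" using h by simp
      show "0 < -2 * Re k" using h by simp
      show "(cmod (c * exp (k * of_real x)))^2 \<le> (cmod c)^2 * (indicator {a..} x *\<^sub>R exp (- (-2 * Re k) * x))"
        if "x \<in> I" for x using that h by (simp add: E_norm2)
    qed
  next
    assume h: "I = {..a} \<and> 0 < Re k"
    show ?thesis
    proof (rule L2_onI[OF E_meas _ integrable_mult_right[OF exp_int_left[of "2 * Re k" a]]])
      show "I \<in> sets lebesgue" using h by simp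
      show "0 < 2 * Re k" using h by simp
      show "(cmod (c * exp (k * of_real x)))^2 \<le> (cmod c)^2 * (indicator {..a} x *\<^sub>R exp ((2 * Re k) * x))"
        if "x \<in> I" for x using that h by (simp add: E_norm2)
    qed
  qed
qed

lemma dv_E:
  fixes c k :: complex assumes "half I" "\<And>x. x \<in> I \<Longrightarrow> \<psi> x = c * exp (k * of_real x)" "x \<in> I"
  shows "dv I \<psi> x = c * k * exp (k * of_real x)"
  unfolding dv_def
  by (rule vector_derivative_within[OF half_notbot[OF assms(1,3)]],
      rule has_vector_derivative_transform_within[OF E_deriv, where d=1]) (use assms in auto)

lemma HL_E:
  fixes c k :: complex assumes "good I k" "\<And>x. x \<in> I \<Longrightarrow> \<psi> x = c * exp (k * of_real x)"
  shows "HL I \<psi>"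
  unfolding HL_def
proof (intro conjI ballI exI[of _ "\<lambda>x. c * k * k * exp (k * of_real x)"])
  have hI: "half I" using assms(1) by (rule good_half)
  show "loc_abs_cont_on I \<psi>"
    by (rule loc_cong[OF hI assms(2)]) (auto simp: loc_abs_cont_on_def intro: E_abs_cont)
  show "\<psi> differentiable at x within I" if "x \<in> I" for x
    by (rule differentiableI_vector, rule has_vector_derivative_transform_within[OF E_deriv, where d=1])
       (use assms that in auto)
  have dv: "\<And>x. x \<in> I \<Longrightarrow> dv I \<psi> x = (c * k) * exp (k * of_real x)"
    using dv_E[OF hI assms(2)] by simp
  show "loc_abs_cont_on I (dv I \<psi>)"
    by (rule loc_cong[OF hI dv]) (auto simp: loc_abs_cont_on_def intro: E_abs_cont)
  show "L2_on I (\<lambda>x. c * k * k * exp (k * of_real x))" using E_L2[OF assms(1)] by simp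
  show "AE x in lebesgue. x \<in> I \<longrightarrow> (dv I \<psi> has_vector_derivative c * k * k * exp (k * of_real x)) (at x within I)"
  proof (rule AE_I2, rule impI)
    fix x assume x: "x \<in> I"
    show "(dv I \<psi> has_vector_derivative c * k * k * exp (k * of_real x)) (at x within I)"
      by (rule has_vector_derivative_transform_within[OF E_deriv[of "c * k" k], where d=1]) (use x dv in auto)
  qed
qed



lemma half_left: "half {..a}" and half_right: "half {a..}" unfolding half_def by auto

lemma DH0star_lin:
  assumes "f \<in> DH0star \<Lambda>" "g \<in> DH0star \<Lambda>"
  shows "(\<lambda>x. a * f x + b * g x) \<in> DH0star \<Lambda>"
  using assms unfolding DH0star_iff
  by (auto intro!: HL_add HL_cmult L2_add L2_cmult half_left half_right)

lemma DH0star_diff: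
  assumes "f \<in> DH0star \<Lambda>" "I \<in> {{..-\<Lambda>}, {\<Lambda>..}}" "x \<in> I"
  shows "f differentiable (at x within I)"
  using assms unfolding DH0star_iff HL_def by auto

lemma dv_lin:
  assumes "f \<in> DH0star \<Lambda>" "g \<in> DH0star \<Lambda>" "I \<in> {{..-\<Lambda>}, {\<Lambda>..}}" "x \<in> I"
  shows "dv I (\<lambda>x. a * f x + b * g x) x = a * dv I f x + b * dv I g x"
proof -
  have hI: "half I" using assms(3) half_left half_right by auto
  have df: "f differentiable (at x within I)" and dg: "g differentiable (at x within I)"
    using DH0star_diff assms by auto
  have "dv I (\<lambda>x. a * f x + b * g x) x = dv I (\<lambda>x. a * f x) x + dv I (\<lambda>x. b * g x) x"
    by (rule dv_add[OF hI assms(4)]) (use df dg in \<open>auto intro: differentiable_mult differentiable_const\<close>)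
  also have "\<dots> = a * dv I f x + b * dv I g x"
    using dv_cmult[OF hI assms(4) df] dv_cmult[OF hI assms(4) dg] by simp
  finally show ?thesis .
qed

lemma dm_lin:
  assumes "f \<in> DH0star \<Lambda>" "g \<in> DH0star \<Lambda>"
  shows "dm \<Lambda> (\<lambda>x. a * f x + b * g x) = a * dm \<Lambda> f + b * dm \<Lambda> g"
  unfolding dm_def by (rule dv_lin[OF assms]) auto

lemma dp_lin:
  assumes "f \<in> DH0star \<Lambda>" "g \<in> DH0star \<Lambda>"
  shows "dp \<Lambda> (\<lambda>x. a * f x + b * g x) = a * dp \<Lambda> f + b * dp \<Lambda> g"
  unfolding dp_def by (rule dv_lin[OF assms]) auto

lemma piece_right:
  fixes c k :: complex
  assumes L: "\<Lambda> > 0" and k: "Re k < 0"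
    and psi: "\<psi> = (\<lambda>x. if \<Lambda> \<le> x then c * exp (k * of_real x) else 0)"
  shows "\<psi> \<in> DH0star \<Lambda>" "\<psi> \<Lambda> = c * exp (k * of_real \<Lambda>)" "\<psi> (-\<Lambda>) = 0"
    "dp \<Lambda> \<psi> = c * k * exp (k * of_real \<Lambda>)" "dm \<Lambda> \<psi> = 0"
proof -
  have eqR: "\<And>x. x \<in> {\<Lambda>..} \<Longrightarrow> \<psi> x = c * exp (k * of_real x)" using psi by auto
  have eqL: "\<And>x. x \<in> {..-\<Lambda>} \<Longrightarrow> \<psi> x = 0 * exp (1 * of_real x)" using psi L by auto
  have gR: "good {\<Lambda>..} k" using k good_def by auto
  have gL: "good {..-\<Lambda>} 1" using good_def by auto
  have meas: "\<psi> \<in> borel_measurable lebesgue"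
  proof -
    have "\<psi> = (\<lambda>x. indicator {\<Lambda>..} x *\<^sub>R (c * exp (k * of_real x)))"
      using psi by (auto simp: indicator_def fun_eq_iff)
    also have "\<dots> \<in> borel_measurable lebesgue"
      by (intro measurable_completion borel_measurable_continuous_on_indicator) (auto intro!: continuous_intros)
    finally show ?thesis .
  qed
  have L2: "L2_on (Omega \<Lambda>) \<psi>"
  proof (rule L2_onI[OF meas _ integrable_mult_right[OF exp_int_right[of "-2 * Re k" \<Lambda>]]])
    show "Omega \<Lambda> \<in> sets lebesgue" by (simp add: Omega_def)
    show "0 < -2 * Re k" using k by simp
    show "(cmod (\<psi> x))^2 \<le> (cmod c)^2 * (indicator {\<Lambda>..} x *\<^sub>R exp (- (-2 * Re k) * x))" for x
      using psi by (simp add: E_norm2 indicator_def)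
  qed
  show "\<psi> \<in> DH0star \<Lambda>" unfolding DH0star_iff
    using HL_E[OF gR eqR] HL_E[OF gL eqL] L2 psi by auto
  show "\<psi> \<Lambda> = c * exp (k * of_real \<Lambda>)" using psi by simp
  show "\<psi> (-\<Lambda>) = 0" using psi L by simp
  show "dp \<Lambda> \<psi> = c * k * exp (k * of_real \<Lambda>)" unfolding dp_def
    by (rule dv_E[OF half_right eqR]) auto
  show "dm \<Lambda> \<psi> = 0" unfolding dm_def
    using dv_E[OF half_left eqL, of "-\<Lambda>"] by simp
qed

lemma piece_left:
  fixes c k :: complex
  assumes L: "\<Lambda> > 0" and k: "Re k > 0"
    and psi: "\<psi> = (\<lambda>x. if x \<le> -\<Lambda> then c * exp (k * of_real x) else 0)"
  shows "\<psi> \<in> DH0star \<Lambda>" "\<psi> (-\<Lambda>) = c * exp (k * of_real (-\<Lambda>))" "\<psi> \<Lambda> = 0"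
    "dm \<Lambda> \<psi> = c * k * exp (k * of_real (-\<Lambda>))" "dp \<Lambda> \<psi> = 0"
proof -
  have eqL: "\<And>x. x \<in> {..-\<Lambda>} \<Longrightarrow> \<psi> x = c * exp (k * of_real x)" using psi by auto
  have eqR: "\<And>x. x \<in> {\<Lambda>..} \<Longrightarrow> \<psi> x = 0 * exp ((-1) * of_real x)" using psi L by auto
  have gL: "good {..-\<Lambda>} k" using k good_def by auto
  have gR: "good {\<Lambda>..} (-1)" using good_def by auto
  have meas: "\<psi> \<in> borel_measurable lebesgue"
  proof -
    have "\<psi> = (\<lambda>x. indicator {..-\<Lambda>} x *\<^sub>R (c * exp (k * of_real x)))"
      using psi by (auto simp: indicator_def fun_eq_iff)
    also have "\<dots> \<in> borel_measurable lebesgue"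
      by (intro measurable_completion borel_measurable_continuous_on_indicator) (auto intro!: continuous_intros)
    finally show ?thesis .
  qed
  have L2: "L2_on (Omega \<Lambda>) \<psi>"
  proof (rule L2_onI[OF meas _ integrable_mult_right[OF exp_int_left[of "2 * Re k" "-\<Lambda>"]]])
    show "Omega \<Lambda> \<in> sets lebesgue" by (simp add: Omega_def)
    show "0 < 2 * Re k" using k by simp
    show "(cmod (\<psi> x))^2 \<le> (cmod c)^2 * (indicator {..-\<Lambda>} x *\<^sub>R exp ((2 * Re k) * x))" for x
      using psi by (simp add: E_norm2 indicator_def)
  qed
  show "\<psi> \<in> DH0star \<Lambda>" unfolding DH0star_iff
    using HL_E[OF gR eqR] HL_E[OF gL eqL] L2 psi by auto
  show "\<psi> (-\<Lambda>) = c * exp (k * of_real (-\<Lambda>))" using psi by simp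
  show "\<psi> \<Lambda> = 0" using psi L by simp
  show "dm \<Lambda> \<psi> = c * k * exp (k * of_real (-\<Lambda>))" unfolding dm_def
    by (rule dv_E[OF half_left eqL]) auto
  show "dp \<Lambda> \<psi> = 0" unfolding dp_def
    using dv_E[OF half_right eqR, of "\<Lambda>"] by simp
qed



lemma Rp_eq: "Rp \<Lambda> = (\<lambda>x. if \<Lambda> \<le> x then of_real (Nc \<Lambda>) * exp (((-1 + \<i>) / of_real (sqrt 2)) * of_real x) else 0)"
  by (simp add: Rp_def fun_eq_iff)
lemma Rm_eq: "Rm \<Lambda> = (\<lambda>x. if \<Lambda> \<le> x then of_real (Nc \<Lambda>) * exp (((-1 - \<i>) / of_real (sqrt 2)) * of_real x) else 0)"
  by (simp add: Rm_def fun_eq_iff)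
lemma Lp_eq: "Lp \<Lambda> = (\<lambda>x. if x \<le> -\<Lambda> then of_real (Nc \<Lambda>) * exp (((1 - \<i>) / of_real (sqrt 2)) * of_real x) else 0)"
  by (simp add: Lp_def fun_eq_iff)
lemma Lm_eq: "Lm \<Lambda> = (\<lambda>x. if x \<le> -\<Lambda> then of_real (Nc \<Lambda>) * exp (((1 + \<i>) / of_real (sqrt 2)) * of_real x) else 0)"
  by (simp add: Lm_def fun_eq_iff)

lemma Re_k: "Re ((-1 + \<i>) / of_real (sqrt 2)) < 0" "Re ((-1 - \<i>) / of_real (sqrt 2)) < 0"
   "Re ((1 - \<i>) / of_real (sqrt 2)) > 0" "Re ((1 + \<i>) / of_real (sqrt 2)) > 0"
  by (simp_all add: Re_divide_of_real)

lemma alg1: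
  fixes A T M q s :: complex
  assumes "s * s = 2" "A \<noteq> 0" "s \<noteq> 0"
  shows "(T * A^2 * ((-1 + \<i>) / s)) * (M / A) = - T * ((1 - \<i>) / s * (M * A))"
  using assms by (simp add: field_simps power2_eq_square)

lemma alg2:
  fixes A T M q s :: complex
  assumes "s * s = 2" "A \<noteq> 0" "s \<noteq> 0"
  shows "(T * A^2 * ((-1 + \<i>) / s)) * ((-1 - \<i>) / s * (M / A)) = T * (M * A)"
proof -
  have "(T * A^2 * ((-1 + \<i>) / s)) * ((-1 - \<i>) / s * (M / A)) = T * A * M * ((-1 + \<i>) * (-1 - \<i>)) / (s * s)"
    using assms by (simp add: field_simps power2_eq_square)
  also have "(-1 + \<i>) * (-1 - \<i>) = 2" by (simp add: algebra_simps)
  finally show ?thesis using assms by simp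
qed



lemma alg3:
  fixes A T M s :: complex
  assumes "s * s = 2" "A \<noteq> 0" "s \<noteq> 0" "T \<noteq> 0"
  shows "M * A = - T * ((A^2 * ((-1 + \<i>) / s) / T) * ((1 + \<i>) / s * (M / A)))"
proof -
  have "- T * ((A^2 * ((-1 + \<i>) / s) / T) * ((1 + \<i>) / s * (M / A))) = - A * M * ((-1 + \<i>) * (1 + \<i>)) / (s * s)"
    using assms by (simp add: field_simps power2_eq_square)
  also have "(-1 + \<i>) * (1 + \<i>) = -2" by (simp add: algebra_simps)
  finally show ?thesis using assms by simp
qed

lemma alg4:
  fixes A T M s :: complex
  assumes "s * s = 2" "A \<noteq> 0" "s \<noteq> 0" "T \<noteq> 0"
  shows "(-1 + \<i>) / s * (M * A) = T * ((A^2 * ((-1 + \<i>) / s) / T) * (M / A))"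
  using assms by (simp add: field_simps power2_eq_square)

lemma cis34: "exp (\<i> * of_real (3 * pi / 4)) = (-1 + \<i>) / of_real (sqrt 2)"
proof -
  have e: "3 * pi / 4 = pi - pi/4" by simp
  have "exp (\<i> * of_real (3 * pi / 4)) = cis (pi - pi/4)" unfolding e by (simp add: cis_conv_exp)
  also have "\<dots> = Complex (- (sqrt 2 / 2)) (sqrt 2 / 2)"
    by (simp only: cis.ctr cos_pi_minus sin_pi_minus cos_45 sin_45)
  also have "\<dots> = (-1 + \<i>) / of_real (sqrt 2)"
  proof -
    have s: "sqrt 2 * sqrt 2 = (2::real)" by simp
    have "sqrt 2 / 2 = 1 / sqrt (2::real)" using s by (simp add: field_simps)
    then show ?thesis by (simp add: complex_eq_iff Re_divide_of_real Im_divide_of_real)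
  qed
  finally show ?thesis .
qed

context
  fixes \<Lambda> \<theta> :: real
begin

definition "ww = \<Lambda> / sqrt 2"
definition "AA = exp (\<i> * of_real ww)"
definition "MM = of_real (Nc \<Lambda>) * exp (- of_real ww :: complex)"
definition "TT = exp (\<i> * of_real \<theta>)"
definition "ss = (of_real (sqrt 2) :: complex)"

lemma ss: "ss * ss = 2" "ss \<noteq> 0" unfolding ss_def by (simp_all flip: of_real_mult)
lemma nz: "AA \<noteq> 0" "MM \<noteq> 0" "TT \<noteq> 0"
  unfolding AA_def MM_def TT_def Nc_def by auto

lemma ex1: "exp (((-1 + \<i>) / of_real (sqrt 2)) * of_real \<Lambda>) = exp (- of_real ww) * AA"
proof -
  have eq: "((-1 + \<i>) / of_real (sqrt 2)) * of_real \<Lambda> = - of_real ww + \<i> * of_real ww"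
    by (simp add: ww_def field_simps)
  show ?thesis unfolding eq exp_add AA_def by (rule refl)
qed
lemma ex2: "exp (((-1 - \<i>) / of_real (sqrt 2)) * of_real \<Lambda>) = exp (- of_real ww) / AA"
proof -
  have eq: "((-1 - \<i>) / of_real (sqrt 2)) * of_real \<Lambda> = - of_real ww + - (\<i> * of_real ww)"
    by (simp add: ww_def field_simps)
  show ?thesis unfolding eq exp_add exp_minus[of "\<i> * _"] AA_def by (simp add: divide_inverse)
qed
lemma ex3: "exp (((1 - \<i>) / of_real (sqrt 2)) * of_real (-\<Lambda>)) = exp (- of_real ww) * AA"
proof -
  have eq: "((1 - \<i>) / of_real (sqrt 2)) * of_real (-\<Lambda>) = - of_real ww + \<i> * of_real ww"
    by (simp add: ww_def field_simps)
  show ?thesis unfolding eq exp_add AA_def by (rule refl)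
qed
lemma ex4: "exp (((1 + \<i>) / of_real (sqrt 2)) * of_real (-\<Lambda>)) = exp (- of_real ww) / AA"
proof -
  have eq: "((1 + \<i>) / of_real (sqrt 2)) * of_real (-\<Lambda>) = - of_real ww + - (\<i> * of_real ww)"
    by (simp add: ww_def field_simps)
  show ?thesis unfolding eq exp_add exp_minus[of "\<i> * _"] AA_def by (simp add: divide_inverse)
qed

lemma gr: "gamma_r \<Lambda> \<theta> = TT * AA^2 * ((-1 + \<i>) / ss)"
proof -
  have s: "sqrt 2 * \<Lambda> = 2 * ww" by (simp add: ww_def field_simps)
  have eq: "\<i> * of_real (\<theta> + sqrt 2 * \<Lambda> + 3 * pi / 4) = \<i> * of_real \<theta> + (\<i> * of_real ww + \<i> * of_real ww) + \<i> * of_real (3 * pi / 4)"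
    unfolding s by (simp add: algebra_simps)
  show ?thesis unfolding gamma_r_def eq exp_add cis34
    by (simp add: TT_def AA_def ss_def power2_eq_square)
qed

lemma gl: "gamma_l \<Lambda> \<theta> = AA^2 * ((-1 + \<i>) / ss) / TT"
proof -
  have s: "sqrt 2 * \<Lambda> = 2 * ww" by (simp add: ww_def field_simps)
  have eq: "\<i> * of_real (- \<theta> + sqrt 2 * \<Lambda> + 3 * pi / 4) = - (\<i> * of_real \<theta>) + (\<i> * of_real ww + \<i> * of_real ww) + \<i> * of_real (3 * pi / 4)"
    unfolding s by (simp add: algebra_simps)
  show ?thesis unfolding gamma_l_def eq exp_add exp_minus[of "\<i> * _"] cis34
    by (simp add: TT_def AA_def ss_def power2_eq_square divide_inverse)
qed

end


lemma lin1:
  assumes "f \<in> DH0star \<Lambda>" "g \<in> DH0star \<Lambda>" "F = (\<lambda>x. a * f x + b * g x)"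
  shows "F \<in> DH0star \<Lambda>" "F \<Lambda> = a * f \<Lambda> + b * g \<Lambda>" "F (-\<Lambda>) = a * f (-\<Lambda>) + b * g (-\<Lambda>)"
    "dm \<Lambda> F = a * dm \<Lambda> f + b * dm \<Lambda> g" "dp \<Lambda> F = a * dp \<Lambda> f + b * dp \<Lambda> g"
  using DH0star_lin[OF assms(1,2)] dm_lin[OF assms(1,2)] dp_lin[OF assms(1,2)] assms(3) by auto

context fixes \<Lambda> \<theta> :: real assumes L: "\<Lambda> > 0"
begin

definition "kLp = (1 - \<i>) / ss"
definition "kRm = (-1 - \<i>) / ss"
definition "kRp = (-1 + \<i>) / ss"
definition "kLm = (1 + \<i>) / ss"
definition "phiL = (\<lambda>x. Lp \<Lambda> x + gamma_r \<Lambda> \<theta> * Rm \<Lambda> x)"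
definition "phiR = (\<lambda>x. Rp \<Lambda> x + gamma_l \<Lambda> \<theta> * Lm \<Lambda> x)"

lemma Lp_facts: "Lp \<Lambda> \<in> DH0star \<Lambda>" "Lp \<Lambda> (-\<Lambda>) = MM \<Lambda> * AA \<Lambda>" "Lp \<Lambda> \<Lambda> = 0"
   "dm \<Lambda> (Lp \<Lambda>) = kLp * (MM \<Lambda> * AA \<Lambda>)" "dp \<Lambda> (Lp \<Lambda>) = 0"
  using piece_left[OF L Re_k(3) Lp_eq] unfolding ex3 by (simp_all add: mult_ac MM_def kLp_def ss_def)
lemma Lm_facts: "Lm \<Lambda> \<in> DH0star \<Lambda>" "Lm \<Lambda> (-\<Lambda>) = MM \<Lambda> / AA \<Lambda>" "Lm \<Lambda> \<Lambda> = 0"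
   "dm \<Lambda> (Lm \<Lambda>) = kLm * (MM \<Lambda> / AA \<Lambda>)" "dp \<Lambda> (Lm \<Lambda>) = 0"
  using piece_left[OF L Re_k(4) Lm_eq] unfolding ex4 by (simp_all add: mult_ac MM_def kLm_def ss_def)
lemma Rp_facts: "Rp \<Lambda> \<in> DH0star \<Lambda>" "Rp \<Lambda> \<Lambda> = MM \<Lambda> * AA \<Lambda>" "Rp \<Lambda> (-\<Lambda>) = 0"
   "dp \<Lambda> (Rp \<Lambda>) = kRp * (MM \<Lambda> * AA \<Lambda>)" "dm \<Lambda> (Rp \<Lambda>) = 0"
  using piece_right[OF L Re_k(1) Rp_eq] unfolding ex1 by (simp_all add: mult_ac MM_def kRp_def ss_def)
lemma Rm_facts: "Rm \<Lambda> \<in> DH0star \<Lambda>" "Rm \<Lambda> \<Lambda> = MM \<Lambda> / AA \<Lambda>" "Rm \<Lambda> (-\<Lambda>) = 0"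
   "dp \<Lambda> (Rm \<Lambda>) = kRm * (MM \<Lambda> / AA \<Lambda>)" "dm \<Lambda> (Rm \<Lambda>) = 0"
  using piece_right[OF L Re_k(2) Rm_eq] unfolding ex2 by (simp_all add: mult_ac MM_def kRm_def ss_def)


lemma phiL_facts: "phiL \<in> DH0star \<Lambda>" "phiL (-\<Lambda>) = MM \<Lambda> * AA \<Lambda>" "phiL \<Lambda> = gamma_r \<Lambda> \<theta> * (MM \<Lambda> / AA \<Lambda>)"
  "dm \<Lambda> phiL = kLp * (MM \<Lambda> * AA \<Lambda>)" "dp \<Lambda> phiL = gamma_r \<Lambda> \<theta> * (kRm * (MM \<Lambda> / AA \<Lambda>))"
proof -
  have e: "phiL = (\<lambda>x. 1 * Lp \<Lambda> x + gamma_r \<Lambda> \<theta> * Rm \<Lambda> x)" by (simp add: phiL_def)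
  note l = lin1[OF Lp_facts(1) Rm_facts(1) e]
  show "phiL \<in> DH0star \<Lambda>" "phiL (-\<Lambda>) = MM \<Lambda> * AA \<Lambda>" "phiL \<Lambda> = gamma_r \<Lambda> \<theta> * (MM \<Lambda> / AA \<Lambda>)"
  "dm \<Lambda> phiL = kLp * (MM \<Lambda> * AA \<Lambda>)" "dp \<Lambda> phiL = gamma_r \<Lambda> \<theta> * (kRm * (MM \<Lambda> / AA \<Lambda>))"
    using l Lp_facts Rm_facts by simp_all
qed

lemma phiR_facts: "phiR \<in> DH0star \<Lambda>" "phiR (-\<Lambda>) = gamma_l \<Lambda> \<theta> * (MM \<Lambda> / AA \<Lambda>)" "phiR \<Lambda> = MM \<Lambda> * AA \<Lambda>"
  "dm \<Lambda> phiR = gamma_l \<Lambda> \<theta> * (kLm * (MM \<Lambda> / AA \<Lambda>))" "dp \<Lambda> phiR = kRp * (MM \<Lambda> * AA \<Lambda>)"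
proof -
  have e: "phiR = (\<lambda>x. 1 * Rp \<Lambda> x + gamma_l \<Lambda> \<theta> * Lm \<Lambda> x)" by (simp add: phiR_def)
  note l = lin1[OF Rp_facts(1) Lm_facts(1) e]
  show "phiR \<in> DH0star \<Lambda>" "phiR (-\<Lambda>) = gamma_l \<Lambda> \<theta> * (MM \<Lambda> / AA \<Lambda>)" "phiR \<Lambda> = MM \<Lambda> * AA \<Lambda>"
  "dm \<Lambda> phiR = gamma_l \<Lambda> \<theta> * (kLm * (MM \<Lambda> / AA \<Lambda>))" "dp \<Lambda> phiR = kRp * (MM \<Lambda> * AA \<Lambda>)"
    using l Lp_facts Rm_facts Rp_facts Lm_facts by simp_all
qed

lemma id1: "gamma_r \<Lambda> \<theta> * (MM \<Lambda> / AA \<Lambda>) = - TT \<theta> * (kLp * (MM \<Lambda> * AA \<Lambda>))"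
  unfolding gr kLp_def by (rule alg1[OF ss(1) nz(1) ss(2)])
lemma id2: "gamma_r \<Lambda> \<theta> * (kRm * (MM \<Lambda> / AA \<Lambda>)) = TT \<theta> * (MM \<Lambda> * AA \<Lambda>)"
  unfolding gr kRm_def by (rule alg2[OF ss(1) nz(1) ss(2)])
lemma id3: "MM \<Lambda> * AA \<Lambda> = - TT \<theta> * (gamma_l \<Lambda> \<theta> * (kLm * (MM \<Lambda> / AA \<Lambda>)))"
  unfolding gl kLm_def by (rule alg3[OF ss(1) nz(1) ss(2) nz(3)])
lemma id4: "kRp * (MM \<Lambda> * AA \<Lambda>) = TT \<theta> * (gamma_l \<Lambda> \<theta> * (MM \<Lambda> / AA \<Lambda>))"
  unfolding gl kRp_def by (rule alg4[OF ss(1) nz(1) ss(2) nz(3)])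

lemma Phi_facts:
  assumes "Phi = (\<lambda>x. cL * phiL x + cR * phiR x)"
  shows "Phi \<in> DH0star \<Lambda>"
    "Phi (-\<Lambda>) = cL * (MM \<Lambda> * AA \<Lambda>) + cR * (gamma_l \<Lambda> \<theta> * (MM \<Lambda> / AA \<Lambda>))"
    "dm \<Lambda> Phi = cL * (kLp * (MM \<Lambda> * AA \<Lambda>)) + cR * (gamma_l \<Lambda> \<theta> * (kLm * (MM \<Lambda> / AA \<Lambda>)))"
    "Phi \<Lambda> = - TT \<theta> * dm \<Lambda> Phi"
    "dp \<Lambda> Phi = TT \<theta> * Phi (-\<Lambda>)"
proof -
  note l = lin1[OF phiL_facts(1) phiR_facts(1) assms]
  show "Phi \<in> DH0star \<Lambda>" using l by simp
  show a: "Phi (-\<Lambda>) = cL * (MM \<Lambda> * AA \<Lambda>) + cR * (gamma_l \<Lambda> \<theta> * (MM \<Lambda> / AA \<Lambda>))"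
    using l phiL_facts phiR_facts by simp
  show b: "dm \<Lambda> Phi = cL * (kLp * (MM \<Lambda> * AA \<Lambda>)) + cR * (gamma_l \<Lambda> \<theta> * (kLm * (MM \<Lambda> / AA \<Lambda>)))"
    using l phiL_facts phiR_facts by simp
  have "Phi \<Lambda> = cL * (gamma_r \<Lambda> \<theta> * (MM \<Lambda> / AA \<Lambda>)) + cR * (MM \<Lambda> * AA \<Lambda>)"
    using l phiL_facts phiR_facts by simp
  also have "\<dots> = cL * (- TT \<theta> * (kLp * (MM \<Lambda> * AA \<Lambda>))) + cR * (- TT \<theta> * (gamma_l \<Lambda> \<theta> * (kLm * (MM \<Lambda> / AA \<Lambda>))))"
    using id1 id3 by metis
  also have "\<dots> = - TT \<theta> * dm \<Lambda> Phi" unfolding b by (simp add: algebra_simps)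
  finally show "Phi \<Lambda> = - TT \<theta> * dm \<Lambda> Phi" .
  have "dp \<Lambda> Phi = cL * (gamma_r \<Lambda> \<theta> * (kRm * (MM \<Lambda> / AA \<Lambda>))) + cR * (kRp * (MM \<Lambda> * AA \<Lambda>))"
    using l phiL_facts phiR_facts by simp
  also have "\<dots> = cL * (TT \<theta> * (MM \<Lambda> * AA \<Lambda>)) + cR * (TT \<theta> * (gamma_l \<Lambda> \<theta> * (MM \<Lambda> / AA \<Lambda>)))"
    using id2 id4 by metis
  also have "\<dots> = TT \<theta> * Phi (-\<Lambda>)" unfolding a by (simp add: algebra_simps)
  finally show "dp \<Lambda> Phi = TT \<theta> * Phi (-\<Lambda>)" .
qed

end


lemma zero_DH0: assumes "\<Lambda> > 0" shows "(\<lambda>x. 0) \<in> DH0 \<Lambda>"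
proof -
  have e: "(\<lambda>x. 0::complex) = (\<lambda>x. 0 * Rp \<Lambda> x + 0 * Rp \<Lambda> x)" by simp
  note l = lin1[OF Rp_facts(1)[OF assms] Rp_facts(1)[OF assms] e]
  show ?thesis unfolding DH0_def using l by simp
qed

lemma kdiff: fixes \<Lambda> :: real assumes L: "\<Lambda> > 0" shows "kLm - kLp \<noteq> 0" "kLp \<noteq> 0"
  by (simp_all add: kLm_def[OF L] kLp_def[OF L] ss_def complex_eq_iff Im_divide_of_real Re_divide_of_real)

lemma G_alpha:
  assumes L: "\<Lambda> > 0" and p0: "\<psi>0 \<in> DH0 \<Lambda>"
    and F: "F = (\<lambda>x. \<psi>0 x + cL * (Lp \<Lambda> x + gamma_r \<Lambda> \<theta> * Rm \<Lambda> x) + cR * (Rp \<Lambda> x + gamma_l \<Lambda> \<theta> * Lm \<Lambda> x))"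
  shows "F \<in> Dalpha \<Lambda> (- TT \<theta>) (TT \<theta>)"
proof -
  define Phi where "Phi = (\<lambda>x. cL * phiL \<Lambda> \<theta> x + cR * phiR \<Lambda> \<theta> x)"
  note P = Phi_facts[OF L Phi_def]
  have p0s: "\<psi>0 \<in> DH0star \<Lambda>" "\<psi>0 \<Lambda> = 0" "\<psi>0 (-\<Lambda>) = 0" "dm \<Lambda> \<psi>0 = 0" "dp \<Lambda> \<psi>0 = 0"
    using p0 unfolding DH0_def by auto
  have e: "F = (\<lambda>x. 1 * \<psi>0 x + 1 * Phi x)"
    unfolding F Phi_def phiL_def[OF L] phiR_def[OF L] by (simp add: algebra_simps)
  note l = lin1[OF p0s(1) P(1) e]
  show ?thesis unfolding Dalpha_def using l p0s P by simp
qed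

theorem theorem2:
  fixes \<Lambda> \<theta> :: real and a2 a3 :: complex
  assumes "\<Lambda> > 0" and "0 \<le> \<theta>" and "\<theta> < 2 * pi"
  shows "Dgamma \<Lambda> \<theta> = Dalpha \<Lambda> a2 a3 \<longleftrightarrow> a2 = - exp (\<i> * of_real \<theta>) \<and> a3 = exp (\<i> * of_real \<theta>)"
proof -
  note L = assms(1)
  have T: "exp (\<i> * of_real \<theta>) = TT \<theta>" by (simp add: TT_def)
  show ?thesis unfolding T
  proof
    assume eq: "Dgamma \<Lambda> \<theta> = Dalpha \<Lambda> a2 a3"
    have "phiL \<Lambda> \<theta> \<in> Dgamma \<Lambda> \<theta>"
      unfolding Dgamma_def
      by (rule CollectI, rule exI[of _ "\<lambda>x. 0"], rule exI[of _ 1], rule exI[of _ 0])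
         (simp add: zero_DH0[OF L] phiL_def[OF L])
    then have "phiL \<Lambda> \<theta> \<in> Dalpha \<Lambda> a2 a3" using eq by simp
    then have c: "phiL \<Lambda> \<theta> \<Lambda> = a2 * dm \<Lambda> (phiL \<Lambda> \<theta>)" "dp \<Lambda> (phiL \<Lambda> \<theta>) = a3 * phiL \<Lambda> \<theta> (-\<Lambda>)"
      unfolding Dalpha_def by auto
    have nz1: "kLp * (MM \<Lambda> * AA \<Lambda>) \<noteq> 0" using kdiff(2)[OF L] nz by simp
    have nz2: "MM \<Lambda> * AA \<Lambda> \<noteq> 0" using nz by simp
    have "- TT \<theta> * (kLp * (MM \<Lambda> * AA \<Lambda>)) = a2 * (kLp * (MM \<Lambda> * AA \<Lambda>))"
      using c(1) unfolding phiL_facts(3)[OF L] phiL_facts(4)[OF L] id1[OF L] .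
    then have "a2 = - TT \<theta>" using nz1 by (metis mult_cancel_right)
    moreover have "TT \<theta> * (MM \<Lambda> * AA \<Lambda>) = a3 * (MM \<Lambda> * AA \<Lambda>)"
      using c(2) unfolding phiL_facts(2)[OF L] phiL_facts(5)[OF L] id2[OF L] by simp
    then have "a3 = TT \<theta>" using nz2 by (metis mult_cancel_right)
    ultimately show "a2 = - TT \<theta> \<and> a3 = TT \<theta>" by simp
  next
    assume "a2 = - TT \<theta> \<and> a3 = TT \<theta>"
    then have a: "a2 = - TT \<theta>" "a3 = TT \<theta>" by auto
    show "Dgamma \<Lambda> \<theta> = Dalpha \<Lambda> a2 a3"
    proof
      show "Dgamma \<Lambda> \<theta> \<subseteq> Dalpha \<Lambda> a2 a3"
        unfolding a using G_alpha[OF L] unfolding Dgamma_def by blast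
    next
      show "Dalpha \<Lambda> a2 a3 \<subseteq> Dgamma \<Lambda> \<theta>"
      proof
        fix \<psi> assume "\<psi> \<in> Dalpha \<Lambda> a2 a3"
        then have ps: "\<psi> \<in> DH0star \<Lambda>" "\<psi> \<Lambda> = - TT \<theta> * dm \<Lambda> \<psi>" "dp \<Lambda> \<psi> = TT \<theta> * \<psi> (-\<Lambda>)"
          unfolding Dalpha_def a by auto
        define u where "u = \<psi> (-\<Lambda>)"
        define p where "p = dm \<Lambda> \<psi>"
        define Y where "Y = (p - kLp * u) / (kLm - kLp)"
        define X where "X = u - Y"
        define cL where "cL = X / (MM \<Lambda> * AA \<Lambda>)"
        define cR where "cR = Y / (gamma_l \<Lambda> \<theta> * (MM \<Lambda> / AA \<Lambda>))"
        have gl0: "gamma_l \<Lambda> \<theta> \<noteq> 0" by (simp add: gamma_l_def)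
        have hX: "cL * (MM \<Lambda> * AA \<Lambda>) = X" unfolding cL_def using nz by simp
        have hY: "cR * (gamma_l \<Lambda> \<theta> * (MM \<Lambda> / AA \<Lambda>)) = Y" unfolding cR_def using nz gl0 by simp
        have hXY: "kLp * X + kLm * Y = p"
        proof -
          have "kLp * X + kLm * Y = kLp * u + (kLm - kLp) * Y" unfolding X_def by (simp add: algebra_simps)
          also have "(kLm - kLp) * Y = p - kLp * u" unfolding Y_def using kdiff(1)[OF L] by simp
          finally show ?thesis by simp
        qed
        define Phi where "Phi = (\<lambda>x. cL * phiL \<Lambda> \<theta> x + cR * phiR \<Lambda> \<theta> x)"
        note P = Phi_facts[OF L Phi_def]
        have P1: "Phi (-\<Lambda>) = u" using P(2) hX hY unfolding X_def by simp
        have P2: "dm \<Lambda> Phi = p"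
        proof -
          have "dm \<Lambda> Phi = kLp * (cL * (MM \<Lambda> * AA \<Lambda>)) + kLm * (cR * (gamma_l \<Lambda> \<theta> * (MM \<Lambda> / AA \<Lambda>)))"
            using P(3) by (simp add: algebra_simps)
          also have "\<dots> = kLp * X + kLm * Y" unfolding hX hY ..
          finally show ?thesis using hXY by simp
        qed
        define \<psi>0 where "\<psi>0 = (\<lambda>x. 1 * \<psi> x + (-1) * Phi x)"
        note l = lin1[OF ps(1) P(1) \<psi>0_def]
        have "\<psi>0 \<in> DH0 \<Lambda>" unfolding DH0_def
          using l ps P P1 P2 by (simp add: u_def p_def)
        moreover have "\<psi> = (\<lambda>x. \<psi>0 x + cL * (Lp \<Lambda> x + gamma_r \<Lambda> \<theta> * Rm \<Lambda> x) + cR * (Rp \<Lambda> x + gamma_l \<Lambda> \<theta> * Lm \<Lambda> x))"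
          unfolding \<psi>0_def Phi_def phiL_def[OF L] phiR_def[OF L] by (simp add: algebra_simps)
        ultimately show "\<psi> \<in> Dgamma \<Lambda> \<theta>" unfolding Dgamma_def by blast
      qed
    qed
  qed
qed

end
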